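(* Let $n$ be an odd positive integer, and let $a,b$ be distinct integers with $0<a,b<n$, $b$ odd and $a$ even, such that $G=C_{2n}(a,b,n)$ is a connected $5$-regular circulant graph. Then $G$ admits a factorization (in the sense described in the context) as a Cartesian product of a $3$-regular circulant graph and a $2$-regular circulant graph if and only if there exist positive integers $p,q$ with $p>2$, $1<q<n$, $p\mid a$, $q\mid b$, $pq=2n$ and $\gcd(p,q)=1$.
   Context: For an integer $m$ and a set $R$ of positive integers each at most $m/2$, the circulant graph $C_m(R)$ has vertex set $\{0,1,\dots,m-1\}$, with $i$ and $j$ adjacent iff $\min(|i-j|,\,m-|i-j|)\in R$; it is regular of degree $2|R|$ if $m/2\notin R$ and of degree $2|R|-1$ if $m/2\in R$. $C_{2n}(a,b,n)$ denotes the circulant graph on $2n$ vertices with jump set $\{a,b,n\}$. The Cartesian product $G_1\square G_2$ has vertex set $V(G_1)\times V(G_2)$, with $(u_1,v_1)\sim(u_2,v_2)$ iff either $u_1=u_2$ and $v_1v_2\in E(G_2)$, or $v_1=v_2$ and $u_1u_2\in E(G_1)$. The factorization theorem for circulant graphs states: if $p,q$ are relatively prime, $R\subseteq[1,p/2]$, $S\subseteq[1,q/2]$ and $T=qR\cup pS$ (where $qR=\{qr:r\in R\}$, $pS=\{ps:s\in S\}$), then $C_{pq}(T)\cong C_p(R)\square C_q(S)$. "$G=C_{2n}(a,b,n)$ admits a factorization as a Cartesian product of a $3$-regular and a $2$-regular circulant graph" means: there exist relatively prime integers $p,q>1$ with $pq=2n$ and sets of integers $R\subseteq[1,p/2]$,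 $S\subseteq[1,q/2]$ with $qR\cup pS=\{a,b,n\}$, such that $C_p(R)$ is $3$-regular and $C_q(S)$ is $2$-regular (so that $G\cong C_p(R)\square C_q(S)$ by the factorization theorem). *)

theory Defs
  imports Main
begin

definition circ_adj :: "nat \<Rightarrow> nat set \<Rightarrow> nat \<Rightarrow> nat \<Rightarrow> bool" where
  "circ_adj m R i j \<longleftrightarrow> i < m \<and> j < m \<and>
     (let d = (if i \<le> j then j - i else i - j) in min d (m - d) \<in> R)"

definition jump_set :: "nat \<Rightarrow> nat set \<Rightarrow> bool" where
  "jump_set m R \<longleftrightarrow> (\<forall>r\<in>R. 1 \<le> r \<and> 2 * r \<le> m)"

definition circ_degree :: "nat \<Rightarrow> nat set \<Rightarrow> nat \<Rightarrow> nat" where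
  "circ_degree m R i = card {j. j < m \<and> circ_adj m R i j}"

definition circ_regular :: "nat \<Rightarrow> nat set \<Rightarrow> nat \<Rightarrow> bool" where
  "circ_regular m R k \<longleftrightarrow> (\<forall>i<m. circ_degree m R i = k)"

definition circ_connected :: "nat \<Rightarrow> nat set \<Rightarrow> bool" where
  "circ_connected m R \<longleftrightarrow> (\<forall>i<m. \<forall>j<m. (circ_adj m R)\<^sup>*\<^sup>* i j)"

definition admits_3_2_factorization :: "nat \<Rightarrow> nat \<Rightarrow> nat \<Rightarrow> bool" where
  "admits_3_2_factorization n a b \<longleftrightarrow>
     (\<exists>p q R S. p > 1 \<and> q > 1 \<and> coprime p q \<and> p * q = 2 * n \<and>
        jump_set p R \<and> jump_set q S \<and>
        (\<lambda>r. q * r) ` R \<union> (\<lambda>s. p * s) ` S = {a, b, n} \<and>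
        circ_regular p R 3 \<and> circ_regular q S 2)"

end

theory Submission
  imports Defs
begin

lemma adj0: "circ_adj m R 0 x \<longleftrightarrow> x < m \<and> min x (m - x) \<in> R"
  by (auto simp: circ_adj_def Let_def)

lemma deg_shift:
  assumes "i < m"
  shows "circ_degree m R i = circ_degree m R 0"
proof -
  let ?A = "{x. x < m \<and> circ_adj m R 0 x}"
  let ?B = "{j. j < m \<and> circ_adj m R i j}"
  let ?f = "\<lambda>x. (i + x) mod m"
  let ?g = "\<lambda>j. (j + m - i) mod m"
  have gf: "?g (?f x) = x" if "x < m" for x
  proof (cases "i + x < m")
    case True then show ?thesis using that assms by simp
  next
    case False
    then have "(i + x) mod m = i + x - m" using that assms
      by (simp add: mod_if)
    then show ?thesis using that assms False by (simp add: mod_if)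
  qed
  have fg: "?f (?g j) = j" if "j < m" for j
  proof (cases "i \<le> j")
    case True
    then have "(j + m - i) mod m = j - i" using that assms by (simp add: mod_if)
    then show ?thesis using that assms True by (simp add: mod_if)
  next
    case False
    then have "(j + m - i) mod m = j + m - i" using that assms by (simp add: mod_if)
    then show ?thesis using that assms False by (simp add: mod_if)
  qed
  have fA: "?f x \<in> ?B" if "x \<in> ?A" for x
  proof -
    from that have x: "x < m" "min x (m - x) \<in> R" by (auto simp: adj0)
    show ?thesis
    proof (cases "i + x < m")
      case True then show ?thesis using x assms by (auto simp: circ_adj_def Let_def)
    next
      case False
      then have e: "(i + x) mod m = i + x - m" using x assms by (simp add: mod_if)
      have "min (m - x) (m - (m - x)) = min x (m - x)" using x by auto
      then show ?thesis using x assms False e by (auto simp: circ_adj_def Let_def)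
    qed
  qed
  have gB: "?g j \<in> ?A" if "j \<in> ?B" for j
  proof -
    from that have j: "j < m" and d: "min (if i \<le> j then j - i else i - j) (m - (if i \<le> j then j - i else i - j)) \<in> R"
      by (auto simp: circ_adj_def Let_def)
    show ?thesis
    proof (cases "i \<le> j")
      case True
      then have "(j + m - i) mod m = j - i" using j assms by (simp add: mod_if)
      then show ?thesis using True d j by (auto simp: adj0)
    next
      case False
      then have e: "(j + m - i) mod m = j + m - i" using j assms by (simp add: mod_if)
      have "min (j + m - i) (m - (j + m - i)) = min (i - j) (m - (i - j))" using False j assms by auto
      then show ?thesis using False d j assms e by (auto simp: adj0)
    qed
  qed
  have "card ?A = card ?B"
  proof (rule card_bij_eq[where f = ?f and g = ?g])
    show "inj_on ?f ?A" by (rule inj_on_inverseI[where g = ?g]) (use gf in auto)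
    show "inj_on ?g ?B" by (rule inj_on_inverseI[where g = ?f]) (use fg in auto)
  qed (use fA gB in auto)
  then show ?thesis by (simp add: circ_degree_def)
qed

lemma deg0:
  assumes "jump_set m R"
  shows "circ_degree m R 0 = card R + card {r\<in>R. 2*r<m}"
proof -
  have A: "{j. j<m \<and> circ_adj m R 0 j} = R \<union> (\<lambda>r. m-r) ` {r\<in>R. 2*r<m}"
  proof (rule set_eqI, rule iffI)
    fix j assume "j \<in> {j. j<m \<and> circ_adj m R 0 j}"
    then have j: "j < m" "min j (m - j) \<in> R" by (auto simp: adj0)
    show "j \<in> R \<union> (\<lambda>r. m-r) ` {r\<in>R. 2*r<m}"
    proof (cases "j \<le> m - j")
      case True then show ?thesis using j by auto
    next
      case False
      then have "m - j \<in> {r\<in>R. 2*r<m}" "j = m - (m - j)" using j by auto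
      then show ?thesis by blast
    qed
  next
    fix j assume "j \<in> R \<union> (\<lambda>r. m-r) ` {r\<in>R. 2*r<m}"
    then show "j \<in> {j. j<m \<and> circ_adj m R 0 j}"
    proof
      assume "j \<in> R"
      then have "1 \<le> j" "2*j \<le> m" using assms by (auto simp: jump_set_def)
      then show ?thesis using \<open>j \<in> R\<close> by (auto simp: adj0 min_def)
    next
      assume "j \<in> (\<lambda>r. m-r) ` {r\<in>R. 2*r<m}"
      then obtain r where r: "r \<in> R" "2*r<m" "j = m - r" by auto
      then have "1 \<le> r" using assms by (auto simp: jump_set_def)
      then show ?thesis using r by (auto simp: adj0 min_def)
    qed
  qed
  have fin: "finite R"
    by (rule finite_subset[of _ "{..m}"]) (use assms in \<open>auto simp: jump_set_def\<close>)
  have disj: "R \<inter> (\<lambda>r. m-r) ` {r\<in>R. 2*r<m} = {}"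
    using assms by (auto simp: jump_set_def)
  have inj: "inj_on (\<lambda>r. m-r) {r\<in>R. 2*r<m}"
    by (auto simp: inj_on_def)
  have "card (R \<union> (\<lambda>r. m-r) ` {r\<in>R. 2*r<m}) = card R + card {r\<in>R. 2*r<m}"
    using fin disj inj by (simp add: card_Un_disjoint card_image)
  then show ?thesis using A by (simp add: circ_degree_def)
qed

lemma reg_iff:
  assumes "jump_set m R" "0 < m"
  shows "circ_regular m R k \<longleftrightarrow> card R + card {r\<in>R. 2*r<m} = k"
proof -
  have "circ_degree m R i = card R + card {r\<in>R. 2*r<m}" if "i < m" for i
    using deg_shift[OF that, of R] deg0[OF assms(1)] by simp
  then show ?thesis using assms(2) unfolding circ_regular_def by auto
qed

lemma shape:
  assumes "jump_set m R"
  shows "card R = card {r\<in>R. 2*r<m} + card {r\<in>R. 2*r=m} \<and> card {r\<in>R. 2*r=m} \<le> 1"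
proof -
  have fin: "finite R"
    by (rule finite_subset[of _ "{..m}"]) (use assms in \<open>auto simp: jump_set_def\<close>)
  have "R = {r\<in>R. 2*r<m} \<union> {r\<in>R. 2*r=m}" using assms by (auto simp: jump_set_def)
  moreover have "card ({r\<in>R. 2*r<m} \<union> {r\<in>R. 2*r=m}) = card {r\<in>R. 2*r<m} + card {r\<in>R. 2*r=m}"
    using fin by (intro card_Un_disjoint) auto
  moreover have "card {r\<in>R. 2*r=m} \<le> 1"
  proof -
    have "{r\<in>R. 2*r=m} \<subseteq> {m div 2}" by auto
    then show ?thesis using card_mono[of "{m div 2}"] by simp
  qed
  ultimately show ?thesis by metis
qed

lemma reg2:
  assumes "jump_set q S" "0 < q" "circ_regular q S 2"
  shows "\<exists>s. S = {s} \<and> 1 \<le> s \<and> 2*s < q"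
proof -
  have c: "card S + card {r\<in>S. 2*r<q} = 2" using reg_iff assms by blast
  have sh: "card S = card {r\<in>S. 2*r<q} + card {r\<in>S. 2*r=q}" "card {r\<in>S. 2*r=q} \<le> 1"
    using shape[OF assms(1)] by auto
  have t1: "card {r\<in>S. 2*r<q} = 1" using c sh by linarith
  have "card {r\<in>S. 2*r=q} = 0" using c sh by presburger
  obtain s where s: "{r\<in>S. 2*r<q} = {s}" using t1 by (auto simp: card_1_singleton_iff)
  have fin: "finite S"
    by (rule finite_subset[of _ "{..q}"]) (use assms in \<open>auto simp: jump_set_def\<close>)
  have "{r\<in>S. 2*r=q} = {}" using \<open>card {r\<in>S. 2*r=q} = 0\<close> fin by simp
  then have e: "\<And>x. x \<in> S \<Longrightarrow> 2*x \<noteq> q" by blast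
  have "x \<in> {r\<in>S. 2*r<q}" if "x \<in> S" for x
  proof -
    have "2*x \<le> q" using that assms(1) unfolding jump_set_def by blast
    then have "2*x < q" using e[OF that] by linarith
    then show ?thesis using that by simp
  qed
  then have "S = {s}" using s by blast
  moreover have "2*s < q" "s \<in> S" using s by auto
  ultimately show ?thesis using assms(1) by (auto simp: jump_set_def)
qed

lemma reg3:
  assumes "jump_set p R" "0 < p" "circ_regular p R 3"
  shows "\<exists>r h. R = {r, h} \<and> 1 \<le> r \<and> 2*r < p \<and> 2*h = p"
proof -
  have c: "card R + card {r\<in>R. 2*r<p} = 3" using reg_iff assms by blast
  have sh: "card R = card {r\<in>R. 2*r<p} + card {r\<in>R. 2*r=p}" "card {r\<in>R. 2*r=p} \<le> 1"
    using shape[OF assms(1)] by auto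
  have t1: "card {r\<in>R. 2*r<p} = 1" using c sh by linarith
  have t2: "card {r\<in>R. 2*r=p} = 1" using c sh by presburger
  obtain r where r: "{x\<in>R. 2*x<p} = {r}" using t1 by (auto simp: card_1_singleton_iff)
  obtain h where h: "{x\<in>R. 2*x=p} = {h}" using t2 by (auto simp: card_1_singleton_iff)
  have "x \<in> {x\<in>R. 2*x<p} \<union> {x\<in>R. 2*x=p}" if "x \<in> R" for x
  proof -
    have "2*x \<le> p" using that assms(1) unfolding jump_set_def by blast
    then show ?thesis using that by auto
  qed
  then have "R = {r, h}" using r h by blast
  moreover have "2*r < p" "r \<in> R" "2*h = p" using r h by auto
  ultimately show ?thesis using assms(1) by (auto simp: jump_set_def)
qed

theorem theorem30:
  fixes n a b :: nat
  assumes "odd n" and "n > 0"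
    and "a \<noteq> b" and "0 < a" and "a < n" and "0 < b" and "b < n"
    and "odd b" and "even a"
    and "circ_connected (2 * n) {a, b, n}"
    and "circ_regular (2 * n) {a, b, n} 5"
  shows "admits_3_2_factorization n a b \<longleftrightarrow>
    (\<exists>p q :: nat. p > 2 \<and> 1 < q \<and> q < n \<and> p dvd a \<and> q dvd b \<and>
        p * q = 2 * n \<and> gcd p q = 1)"
proof
  assume "admits_3_2_factorization n a b"
  then obtain p q R S where pq: "p > 1" "q > 1" "coprime p q" "p * q = 2 * n"
    and J: "jump_set p R" "jump_set q S"
    and E: "(\<lambda>r. q * r) ` R \<union> (\<lambda>s. p * s) ` S = {a, b, n}"
    and G: "circ_regular p R 3" "circ_regular q S 2"
    unfolding admits_3_2_factorization_def by blast
  obtain s where s: "S = {s}" "1 \<le> s" "2*s < q" using reg2[OF J(2) _ G(2)] pq by auto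
  obtain r h where rh: "R = {r, h}" "1 \<le> r" "2*r < p" "2*h = p" using reg3[OF J(1) _ G(1)] pq by auto
  have "(\<lambda>r. q * r) ` R \<union> (\<lambda>s. p * s) ` S = {q*r, q*h, p*s}" unfolding s(1) rh(1) by (simp add: insert_commute)
  then have E2: "{q*r, q*h, p*s} = {a, b, n}" using E by simp
  have "(2*h)*q = 2*n" using rh(4) pq(4) by simp
  then have "2*(h*q) = 2*n" by (simp only: mult.assoc)
  then have qh: "q*h = n" by (simp add: mult.commute)
  have "q*(2*r) < q*p" using rh(3) pq(2) by simp
  then have "2*(q*r) < 2*n" using pq(4) by (simp add: algebra_simps)
  then have qr: "q*r < n" by simp
  have "p*(2*s) < p*q" using s(3) pq(1) by simp
  then have "2*(p*s) < 2*n" using pq(4) by (simp add: algebra_simps)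
  then have ps: "p*s < n" by simp
  have peven: "even (p*s)" using rh(4) by auto
  have "b \<in> {q*r, q*h, p*s}" using E2 by auto
  then have bq: "b = q*r" using qh \<open>b < n\<close> peven \<open>odd b\<close> by auto
  have "a \<in> {q*r, q*h, p*s}" using E2 by auto
  then have ap: "a = p*s" using qh \<open>a < n\<close> bq \<open>a \<noteq> b\<close> by auto
  have p2: "p > 2" using rh by linarith
  have "4 \<le> p" using p2 rh(4) by presburger
  then have "q * 4 \<le> q * p" by simp
  then have "q * 4 \<le> 2 * n" using pq(4) by (simp add: mult.commute)
  then have qn: "q < n" using \<open>n > 0\<close> by linarith
  show "\<exists>p q :: nat. p > 2 \<and> 1 < q \<and> q < n \<and> p dvd a \<and> q dvd b \<and> p * q = 2 * n \<and> gcd p q = 1"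
  proof (rule exI[of _ p], rule exI[of _ q], intro conjI)
    show "gcd p q = 1" using pq(3) by simp
    show "p dvd a" using ap by simp
    show "q dvd b" using bq by simp
  qed (use p2 pq qn in simp_all)
next
  assume "\<exists>p q :: nat. p > 2 \<and> 1 < q \<and> q < n \<and> p dvd a \<and> q dvd b \<and> p * q = 2 * n \<and> gcd p q = 1"
  then obtain p q where pq: "p > 2" "1 < q" "q < n" "p dvd a" "q dvd b" "p * q = 2 * n" "gcd p q = 1"
    by (elim exE conjE) (rule that)
  obtain r where r: "b = q * r" using pq(5) by blast
  obtain s where s: "a = p * s" using pq(4) by blast
  have qodd: "odd q" using r \<open>odd b\<close> by auto
  have "even (p*q)" using pq(6) by simp
  then have peven: "even p" using qodd by simp
  then obtain h where h: "p = 2*h" by blast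
  have qh: "q*h = n" using h pq(6) by (simp add: mult.commute)
  have r1: "1 \<le> r" using r \<open>0 < b\<close> by (cases r) auto
  have s1: "1 \<le> s" using s \<open>0 < a\<close> by (cases s) auto
  have "q*(2*r) < q*p" using r \<open>b < n\<close> pq(6) by (simp add: mult.commute)
  then have r2: "2*r < p" by simp
  have "p*(2*s) < p*q" using s \<open>a < n\<close> pq(6) by simp
  then have s2: "2*s < q" by simp
  have h1: "1 \<le> h" using h pq(1) by simp
  define R where "R = {r, h}"
  define S where "S = {s}"
  have JR: "jump_set p R" using r1 r2 h1 h by (auto simp: R_def jump_set_def)
  have JS: "jump_set q S" using s1 s2 by (auto simp: S_def jump_set_def)
  have rh: "r \<noteq> h" using r2 h by simp
  have "{x\<in>R. 2*x<p} = {r}" using r2 h by (auto simp: R_def)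
  then have GR: "circ_regular p R 3" using reg_iff[OF JR] rh pq(1) by (simp add: R_def)
  have "{x\<in>S. 2*x<q} = {s}" using s2 by (auto simp: S_def)
  then have GS: "circ_regular q S 2" using reg_iff[OF JS] pq(2) by (simp add: S_def)
  have EE: "(\<lambda>r. q * r) ` R \<union> (\<lambda>s. p * s) ` S = {a, b, n}"
    unfolding R_def S_def using r s qh by (simp add: insert_commute)
  show "admits_3_2_factorization n a b"
    unfolding admits_3_2_factorization_def
  proof (rule exI[of _ p], rule exI[of _ q], rule exI[of _ R], rule exI[of _ S], intro conjI)
    show "coprime p q" using pq(7) by (simp add: coprime_iff_gcd_eq_1)
  qed (use pq JR JS GR GS EE in simp_all)
qed

end
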